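(* Let $\Omega$ be any norm on $\mathbb{R}^k$ with dual norm $\Omega_*$, let $-1=x_1<\cdots<x_n=1$ be real numbers, and let $U_X=\{-1,1\}\times\{x_1,\ldots,x_n\}$. Suppose $\alpha_1,\ldots,\alpha_n\in\mathbb{R}^k$ satisfy $$\Omega_*\Big(\sum_{i=1}^n\alpha_i\phi_u(x_i)\Big)\le 1\quad\forall u\in U_X.$$ Then $\Omega_*\big(\sum_{i=1}^n\alpha_i\phi_u(x_i)\big)\le 1$ for all $u\in\mathbb{U}$; i.e., $\alpha_1,\ldots,\alpha_n$ are feasible for the dual problem $$\sup_{\alpha_1,\ldots,\alpha_n\in\mathbb{R}^k}\ -\sum_{i=1}^n\sigma_{S_i}(\alpha_i)\quad\text{subject to}\quad \Omega_*\Big(\sum_{i=1}^n\alpha_i\phi_u(x_i)\Big)\le 1\ \ \forall u\in\mathbb{U}$$ (for any non-empty closed convex sets $S_1,\ldots,S_n\subseteq\mathbb{R}^k$).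
   Context: Let $\mathbb{U}=\{-1,1\}\times[-1,1]$. For $u=(s,c)\in\mathbb{U}$ and $x\in\mathbb{R}$ let $\phi_u(x)=(s(x-c))_+$, where $(t)_+=\max(t,0)$. $\Omega_*(z)=\sup_{\Omega(v)\le1}\langle v,z\rangle$ is the dual norm. For a convex set $S$, $\sigma_S(y)=\sup_{w\in S}w^Ty$ is its support function. *)

theory Defs
  imports "HOL-Analysis.Analysis"
begin

definition is_norm :: "('a::real_vector \<Rightarrow> real) \<Rightarrow> bool" where
  "is_norm \<Omega> \<longleftrightarrow>
     (\<forall>x. 0 \<le> \<Omega> x) \<and> (\<forall>x. \<Omega> x = 0 \<longleftrightarrow> x = 0) \<and>
     (\<forall>c x. \<Omega> (c *\<^sub>R x) = \<bar>c\<bar> * \<Omega> x) \<and>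
     (\<forall>x y. \<Omega> (x + y) \<le> \<Omega> x + \<Omega> y)"

definition dual_norm :: "('a::real_inner \<Rightarrow> real) \<Rightarrow> 'a \<Rightarrow> real" where
  "dual_norm \<Omega> z = Sup {inner v z | v. \<Omega> v \<le> 1}"

definition phi :: "real \<times> real \<Rightarrow> real \<Rightarrow> real" where
  "phi u x = max (fst u * (x - snd u)) 0"

definition UU :: "(real \<times> real) set" where
  "UU = {-1, 1} \<times> {-1..1}"

end

theory Submission
  imports Defs
begin

lemma Om0: "is_norm \<Omega> \<Longrightarrow> \<Omega> 0 = 0"
  unfolding is_norm_def by blast

lemma norm_sum_le:
  fixes \<Omega> :: "'a::real_vector \<Rightarrow> real"
  assumes "is_norm \<Omega>"
  shows "\<Omega> (sum f S) \<le> sum (\<lambda>i. \<Omega> (f i)) S"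
proof (cases "finite S")
  case True
  then show ?thesis
  proof (induction S rule: finite_induct)
    case empty
    then show ?case using Om0[OF assms] by simp
  next
    case (insert a F)
    have "\<Omega> (sum f (insert a F)) = \<Omega> (f a + sum f F)" using insert by simp
    also have "\<dots> \<le> \<Omega> (f a) + \<Omega> (sum f F)" using assms unfolding is_norm_def by blast
    also have "\<dots> \<le> \<Omega> (f a) + (\<Sum>i\<in>F. \<Omega> (f i))" using insert by simp
    also have "\<dots> = (\<Sum>i\<in>insert a F. \<Omega> (f i))" using insert by simp
    finally show ?case .
  qed
next
  case False
  then show ?thesis using Om0[OF assms] by simp
qed

lemma norm_equiv:
  fixes \<Omega> :: "real ^ 'k \<Rightarrow> real"
  assumes N: "is_norm \<Omega>"
  shows "\<exists>C. \<forall>v. norm v \<le> C * \<Omega> v"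
proof -
  define M where "M = (\<Sum>i\<in>UNIV. \<Omega> (axis i (1::real)))"
  have M0: "0 \<le> M" unfolding M_def using N unfolding is_norm_def by (simp add: sum_nonneg)
  have up: "\<Omega> v \<le> norm v * M" for v :: "real ^ 'k"
  proof -
    have "\<Omega> v = \<Omega> (\<Sum>i\<in>UNIV. v$i *\<^sub>R axis i 1)"
      using basis_expansion[of v] by (simp add: scalar_mult_eq_scaleR)
    also have "\<dots> \<le> (\<Sum>i\<in>UNIV. \<Omega> (v$i *\<^sub>R axis i 1))" by (rule norm_sum_le[OF N])
    also have "\<dots> = (\<Sum>i\<in>UNIV. \<bar>v$i\<bar> * \<Omega> (axis i 1))"
      using N unfolding is_norm_def by simp
    also have "\<dots> \<le> (\<Sum>i\<in>UNIV. norm v * \<Omega> (axis i 1))"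
      apply (rule sum_mono) apply (rule mult_right_mono)
      using N component_le_norm_cart unfolding is_norm_def by auto
    also have "\<dots> = norm v * M" unfolding M_def by (simp add: sum_distrib_left)
    finally show ?thesis .
  qed
  have lip: "\<bar>\<Omega> a - \<Omega> b\<bar> \<le> M * dist a b" for a b
  proof -
    have "\<Omega> a \<le> \<Omega> b + \<Omega> (a - b)" using N unfolding is_norm_def
      by (metis add.commute diff_add_cancel)
    moreover have "\<Omega> b \<le> \<Omega> a + \<Omega> (b - a)" using N unfolding is_norm_def
      by (metis add.commute diff_add_cancel)
    moreover have "\<Omega> (a - b) \<le> M * dist a b" using up[of "a-b"] by (simp add: dist_norm mult.commute)
    moreover have "\<Omega> (b - a) \<le> M * dist a b" using up[of "b-a"] by (simp add: dist_norm mult.commute norm_minus_commute)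
    ultimately show ?thesis by linarith
  qed
  have cont: "continuous_on UNIV \<Omega>"
    apply (rule lipschitz_on_continuous_on[where L=M])
    unfolding lipschitz_on_def using M0 lip by (simp add: dist_real_def)
  have ne: "sphere (0::real^'k) 1 \<noteq> {}"
    using norm_axis_1 by (metis mem_sphere_0 empty_iff)
  obtain v0 where v0: "v0 \<in> sphere 0 1" and mn: "\<And>y. y \<in> sphere 0 1 \<Longrightarrow> \<Omega> v0 \<le> \<Omega> y"
    using continuous_attains_inf[OF compact_sphere ne continuous_on_subset[OF cont]] by blast
  have m0: "\<Omega> v0 > 0" using N v0 unfolding is_norm_def
    by (metis less_eq_real_def mem_sphere_0 norm_zero zero_neq_one)
  show ?thesis
  proof (intro exI allI)
    fix v :: "real^'k"
    show "norm v \<le> (1 / \<Omega> v0) * \<Omega> v"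
    proof (cases "v = 0")
      case True then show ?thesis using Om0[OF N] by simp
    next
      case False
      then have "(1/norm v) *\<^sub>R v \<in> sphere 0 1" by simp
      then have "\<Omega> v0 \<le> \<Omega> ((1/norm v) *\<^sub>R v)" by (rule mn)
      also have "\<dots> = \<Omega> v / norm v" using N unfolding is_norm_def by simp
      finally have "\<Omega> v0 * norm v \<le> \<Omega> v" using False by (simp add: field_simps)
      then show ?thesis using m0 by (simp add: field_simps)
    qed
  qed
qed

lemma dual_le1_iff:
  fixes \<Omega> :: "real ^ 'k \<Rightarrow> real"
  assumes N: "is_norm \<Omega>"
  shows "dual_norm \<Omega> z \<le> 1 \<longleftrightarrow> (\<forall>v. \<Omega> v \<le> 1 \<longrightarrow> inner v z \<le> 1)"
proof -
  obtain C where C: "\<And>v. norm v \<le> C * \<Omega> v" using norm_equiv[OF N] by blast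
  have bdd: "bdd_above {inner v z | v. \<Omega> v \<le> 1}"
  proof (rule bdd_aboveI[where M="\<bar>C\<bar> * norm z"])
    fix y assume "y \<in> {inner v z | v. \<Omega> v \<le> 1}"
    then obtain v where y: "y = inner v z" and v: "\<Omega> v \<le> 1" by blast
    have "\<Omega> v \<ge> 0" using N unfolding is_norm_def by auto
    have "C * \<Omega> v \<le> \<bar>C\<bar> * \<Omega> v" by (rule mult_right_mono[OF abs_ge_self \<open>\<Omega> v \<ge> 0\<close>])
    also have "\<dots> \<le> \<bar>C\<bar> * 1" by (rule mult_left_mono[OF v abs_ge_zero])
    finally have nv: "norm v \<le> \<bar>C\<bar>" using C[of v] by simp
    have "y \<le> norm v * norm z" unfolding y by (rule norm_cauchy_schwarz)
    also have "\<dots> \<le> \<bar>C\<bar> * norm z" by (rule mult_right_mono[OF nv norm_ge_zero])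
    finally show "y \<le> \<bar>C\<bar> * norm z" .
  qed
  have ne: "{inner v z | v. \<Omega> v \<le> 1} \<noteq> {}"
    using N unfolding is_norm_def by (metis (mono_tags, lifting) empty_iff mem_Collect_eq zero_le_one)
  show ?thesis unfolding dual_norm_def using cSup_le_iff[OF ne bdd] by blast
qed


lemma max_affine:
  fixes P Q t :: real
  assumes "0 \<le> t" "t \<le> 1" "(P \<ge> 0 \<and> Q \<ge> 0) \<or> (P \<le> 0 \<and> Q \<le> 0)"
  shows "max (t*P + (1-t)*Q) 0 = t * max P 0 + (1-t) * max Q 0"
  using assms(3)
proof
  assume h: "P \<ge> 0 \<and> Q \<ge> 0"
  have "t*P \<ge> 0" "(1-t)*Q \<ge> 0" using h assms by auto
  then show ?thesis using h by simp
next
  assume h: "P \<le> 0 \<and> Q \<le> 0"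
  have "t*P \<le> 0" "(1-t)*Q \<le> 0" using h assms by (auto simp: mult_nonneg_nonpos)
  then show ?thesis using h by simp
qed

lemma phi_affine:
  assumes s: "s \<in> {-1, 1::real}" and t: "0 \<le> t" "t \<le> 1"
    and y: "(y \<le> a \<and> y \<le> b) \<or> (y \<ge> a \<and> y \<ge> b)"
  shows "phi (s, t*a + (1-t)*b) y = t * phi (s, a) y + (1-t) * phi (s, b) y"
proof -
  have e: "s*(y - (t*a + (1-t)*b)) = t*(s*(y-a)) + (1-t)*(s*(y-b))" by algebra
  have sg: "(s*(y-a) \<ge> 0 \<and> s*(y-b) \<ge> 0) \<or> (s*(y-a) \<le> 0 \<and> s*(y-b) \<le> 0)"
    using s y by auto
  show ?thesis unfolding phi_def fst_conv snd_conv e by (rule max_affine[OF t sg])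
qed

theorem lemma2:
  fixes \<Omega> :: "real ^ 'k \<Rightarrow> real"
    and n :: nat
    and x :: "nat \<Rightarrow> real"
    and \<alpha> :: "nat \<Rightarrow> real ^ 'k"
  assumes norm: "is_norm \<Omega>"
    and incr: "\<And>i j. 1 \<le> i \<Longrightarrow> i < j \<Longrightarrow> j \<le> n \<Longrightarrow> x i < x j"
    and first: "x 1 = -1"
    and last: "x n = 1"
    and feas: "\<forall>u \<in> {-1, 1} \<times> x ` {1..n}.
                 dual_norm \<Omega> (\<Sum>i = 1..n. phi u (x i) *\<^sub>R \<alpha> i) \<le> 1"
  shows "\<forall>u \<in> UU. dual_norm \<Omega> (\<Sum>i = 1..n. phi u (x i) *\<^sub>R \<alpha> i) \<le> 1"
proof
  fix u assume "u \<in> UU"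
  then obtain s c where u: "u = (s, c)" and s: "s \<in> {-1, 1}" and c: "-1 \<le> c" "c \<le> 1"
    unfolding UU_def by auto
  define F where "F w = (\<Sum>i = 1..n. phi (s, w) (x i) *\<^sub>R \<alpha> i)" for w
  have mono: "x i \<le> x j" if "1 \<le> i" "i \<le> j" "j \<le> n" for i j
    using incr[of i j] that by (cases "i = j") auto
  have Fx: "dual_norm \<Omega> (F (x k)) \<le> 1" if "k \<in> {1..n}" for k
    using feas s that unfolding F_def by auto
  have "dual_norm \<Omega> (F c) \<le> 1"
  proof (cases "n = 0")
    case True
    then show ?thesis unfolding F_def dual_le1_iff[OF norm] by simp
  next
    case False
    have n2: "n \<ge> 2" using False first last by (cases "n = 1") auto
    define J where "J = {i \<in> {1..n}. x i \<le> c}"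
    have finJ: "finite J" unfolding J_def by simp
    have 1: "1 \<in> J" unfolding J_def using first c n2 by auto
    define j where "j = Max J"
    have jJ: "j \<in> J" unfolding j_def using finJ 1 Max_in by blast
    have jmax: "i \<le> j" if "i \<in> J" for i unfolding j_def using finJ that by simp
    show ?thesis
    proof (cases "j = n")
      case True
      then have "c = x n" using jJ c last unfolding J_def by auto
      then show ?thesis using Fx[of n] n2 by simp
    next
      case False
      have j1: "1 \<le> j" "j < n" using jJ False unfolding J_def by auto
      have "j + 1 \<notin> J" using jmax by fastforce
      then have cb: "c < x (j+1)" using j1 unfolding J_def by auto
      have ac: "x j \<le> c" using jJ unfolding J_def by auto
      define a where "a = x j"
      define b where "b = x (j+1)"
      define t where "t = (b - c) / (b - a)"
      have ab: "a < b" using ac cb unfolding a_def b_def by simp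
      have t0: "0 \<le> t" "t \<le> 1" unfolding t_def using ab ac cb a_def b_def by auto
      have tb: "t*(b-a) = b - c" unfolding t_def using ab by simp
      have "t*a + (1-t)*b = b - t*(b-a)" by algebra
      then have ceq: "c = t*a + (1-t)*b" using tb by simp
      have pw: "phi (s, c) (x i) = t * phi (s, a) (x i) + (1-t) * phi (s, b) (x i)"
        if i: "i \<in> {1..n}" for i
      proof -
        have "(x i \<le> a \<and> x i \<le> b) \<or> (x i \<ge> a \<and> x i \<ge> b)"
        proof (cases "i \<le> j")
          case True
          then have "x i \<le> a" unfolding a_def using mono[of i j] i j1 by auto
          then show ?thesis using ab by auto
        next
          case False
          then have "x i \<ge> b" unfolding b_def using mono[of "j+1" i] i j1 by auto
          then show ?thesis using ab by auto
        qed
        then show ?thesis unfolding ceq by (rule phi_affine[OF s t0])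
      qed
      have Fc: "F c = t *\<^sub>R F a + (1-t) *\<^sub>R F b"
        unfolding F_def scaleR_sum_right sum.distrib[symmetric]
        by (rule sum.cong) (simp_all add: pw scaleR_add_left)
      have Fa: "dual_norm \<Omega> (F a) \<le> 1" unfolding a_def using Fx[of j] j1 by simp
      have Fb: "dual_norm \<Omega> (F b) \<le> 1" unfolding b_def using Fx[of "j+1"] j1 by simp
      show ?thesis unfolding dual_le1_iff[OF norm]
      proof (intro allI impI)
        fix v assume v: "\<Omega> v \<le> 1"
        have ia: "inner v (F a) \<le> 1" using Fa v unfolding dual_le1_iff[OF norm] by blast
        have ib: "inner v (F b) \<le> 1" using Fb v unfolding dual_le1_iff[OF norm] by blast
        have "inner v (F c) = t * inner v (F a) + (1-t) * inner v (F b)"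
          unfolding Fc by (simp add: inner_add_right)
        also have "\<dots> \<le> t * 1 + (1-t) * 1"
          by (rule add_mono; rule mult_left_mono) (use ia ib t0 in auto)
        finally show "inner v (F c) \<le> 1" by simp
      qed
    qed
  qed
  then show "dual_norm \<Omega> (\<Sum>i = 1..n. phi u (x i) *\<^sub>R \<alpha> i) \<le> 1"
    unfolding u F_def .
qed

end
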